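(* There is an absolute constant $c>0$ such that the following holds. Let $q$ and $p$ be positive integers, let $\delta=p-q/2$ (so $p=q/2+\delta$), let $W\subseteq\{0,1,\dots,q-1\}$, let $Q>0$ with $Q|\delta|<q/3$, and let $b$ be an integer with $|2b|<Q$. Then $$\left|f_W\left(\frac{2b}{q}\right)-f_W\left(\frac{b}{p}\right)\right|\ \le\ c\,\frac{|\delta| Q |W|}{q}.$$
   Context: $e(u)=\exp(2\pi i u)$ and, for a finite set of integers $W$, $f_W(t)=\sum_{s\in W}e(st)$. *)

theory Defs
  imports "HOL-Analysis.Analysis"
begin

definition e :: "real \<Rightarrow> complex" where
  "e u = exp (2 * pi * \<i> * complex_of_real u)"

definition fW :: "int set \<Rightarrow> real \<Rightarrow> complex" where
  "fW W t = (\<Sum>s\<in>W. e (of_int s * t))"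

end

theory Submission
  imports Defs
begin

lemma e_diff: "cmod (e x - e y) \<le> 2 * pi * \<bar>x - y\<bar>"
proof -
  have eq: "e x - e y = e y * (exp (\<i> * complex_of_real (2 * pi * (x - y))) - 1)"
    unfolding e_def by (simp add: exp_add[symmetric] algebra_simps)
  have n1: "cmod (e y) = 1" unfolding e_def
    by (metis norm_exp_i_times of_real_mult of_real_numeral mult.commute mult.left_commute)
  have "cmod (e x - e y) = 2 * \<bar>sin (2 * pi * (x - y) / 2)\<bar>"
    unfolding eq norm_mult n1 dist_exp_i_1 by simp
  also have "\<dots> \<le> 2 * \<bar>2 * pi * (x - y) / 2\<bar>"
    using abs_sin_x_le_abs_x[of "2 * pi * (x - y) / 2"] by simp
  also have "\<dots> = 2 * pi * \<bar>x - y\<bar>" by (simp add: abs_mult)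
  finally show ?thesis .
qed

theorem lemma2:
  "\<exists>c::real. c > 0 \<and>
     (\<forall>(q::nat) (p::nat) (W::int set) (Q::real) (b::int).
        q > 0 \<longrightarrow> p > 0 \<longrightarrow> W \<subseteq> {0..<int q} \<longrightarrow> Q > 0 \<longrightarrow>
        Q * \<bar>real p - real q / 2\<bar> < real q / 3 \<longrightarrow>
        real_of_int \<bar>2 * b\<bar> < Q \<longrightarrow>
        cmod (fW W (real_of_int (2 * b) / real q) - fW W (real_of_int b / real p))
          \<le> c * \<bar>real p - real q / 2\<bar> * Q * real (card W) / real q)"
proof (rule exI[of _ "6 * pi"], intro conjI allI impI)
  show "0 < 6 * pi" by simp
  fix q p :: nat and W :: "int set" and Q :: real and b :: int
  assume q: "q > 0" and p: "p > 0" and W: "W \<subseteq> {0..<int q}" and Q: "Q > 0"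
    and h: "Q * \<bar>real p - real q / 2\<bar> < real q / 3" and hb: "real_of_int \<bar>2 * b\<bar> < Q"
  define d where "d = \<bar>real p - real q / 2\<bar>"
  have fin: "finite W" using W finite_subset by blast
  show "cmod (fW W (real_of_int (2 * b) / real q) - fW W (real_of_int b / real p))
          \<le> 6 * pi * \<bar>real p - real q / 2\<bar> * Q * real (card W) / real q"
  proof (cases "b = 0")
    case True
    then show ?thesis using Q by (simp add: fW_def)
  next
    case False
    then have "\<bar>b\<bar> \<ge> 1" by linarith
    then have Q2: "Q > 2" using hb by (simp add: abs_mult)
    have "2 * d \<le> Q * d" using Q2 d_def by (intro mult_right_mono) auto
    then have "d < real q / 6" using h d_def by simp
    then have pq: "real p > real q / 3" using d_def by (simp add: abs_if split: if_splits)
    have tm: "cmod (e (of_int s * (real_of_int (2 * b) / real q)) - e (of_int s * (real_of_int b / real p)))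
        \<le> 6 * pi * d * Q / real q" if s: "s \<in> W" for s
    proof -
      have s0: "0 \<le> s" and sq: "real_of_int s \<le> real q" using s W by auto
      have eq: "of_int s * (real_of_int (2 * b) / real q) - of_int s * (real_of_int b / real p)
          = of_int s * of_int b * (2 * (real p - real q / 2)) / (real q * real p)"
        using q p by (simp add: field_simps)
      have "\<bar>of_int s * (real_of_int (2 * b) / real q) - of_int s * (real_of_int b / real p)\<bar>
          = of_int s * \<bar>of_int b\<bar> * (2 * d) / (real q * real p)"
      proof -
        have "\<bar>2 * real p - real q\<bar> = 2 * \<bar>real p - real q / 2\<bar>" by (simp add: abs_if)
        then show ?thesis unfolding eq d_def using s0 by (simp add: abs_mult)
      qed
      also have "\<dots> \<le> real q * (Q / 2) * (2 * d) / (real q * (real q / 3))"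
      proof (rule frac_le)
        show "0 \<le> real q * (Q / 2) * (2 * d)" using Q d_def by simp
        show "of_int s * \<bar>of_int b\<bar> * (2 * d) \<le> real q * (Q / 2) * (2 * d)"
          using s0 sq hb d_def by (intro mult_right_mono mult_mono) (auto simp: abs_mult)
        show "0 < real q * (real q / 3)" using q by simp
        show "real q * (real q / 3) \<le> real q * real p" using pq q by (simp add: mult_left_mono)
      qed
      also have "\<dots> = 3 * d * Q / real q" using q by (simp add: field_simps)
      finally have "\<bar>of_int s * (real_of_int (2 * b) / real q) - of_int s * (real_of_int b / real p)\<bar>
          \<le> 3 * d * Q / real q" .
      then have "2 * pi * \<bar>of_int s * (real_of_int (2 * b) / real q) - of_int s * (real_of_int b / real p)\<bar>
          \<le> 2 * pi * (3 * d * Q / real q)" by (intro mult_left_mono) auto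
      then show ?thesis using e_diff order_trans by fastforce
    qed
    have "cmod (fW W (real_of_int (2 * b) / real q) - fW W (real_of_int b / real p))
       = cmod (\<Sum>s\<in>W. e (of_int s * (real_of_int (2 * b) / real q)) - e (of_int s * (real_of_int b / real p)))"
      by (simp add: fW_def sum_subtractf)
    also have "\<dots> \<le> (\<Sum>s\<in>W. cmod (e (of_int s * (real_of_int (2 * b) / real q)) - e (of_int s * (real_of_int b / real p))))"
      by (rule norm_sum)
    also have "\<dots> \<le> (\<Sum>s\<in>W. 6 * pi * d * Q / real q)" by (rule sum_mono) (rule tm)
    also have "\<dots> = 6 * pi * d * Q * real (card W) / real q" by simp
    finally show ?thesis unfolding d_def .
  qed
qed

end
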